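(* Let $N\ge2$, $R>0$ and $u\in C(B_R,(0,\infty))$. Suppose there exists $M\in O(N)$ such that $u_M$ is axially symmetric with respect to the $x_N$-axis (i.e. for every $\alpha\in(0,R]$ and $h\in[-\alpha,\alpha]$, $u_M$ is constant on $\{x\in S^{N-1}_\alpha:x_N=h\}$) and, for every $\alpha\in(0,R]$, the function $\theta\mapsto u_M(0_{N-2},\alpha\cos\theta,\alpha\sin\theta)$ is nonincreasing on $[\pi/2,3\pi/2]$. Then $u$ is separable in $B_R$.
   Context: $B_R$ is the closed ball of radius $R$ centered at $0$ in $\mathbb{R}^N$; $S^{N-1}_\alpha$ is the sphere of radius $\alpha$ centered at $0$; $O(N)$ is the orthogonal group and $u_M(x):=u(M^{-1}x)$; $0_k$ is the zero vector of $\mathbb{R}^k$. For an open half-space $H$, $\sigma_H$ is the reflection across $\partial H$. A function $u:B_R\to\mathbb{R}$ is separable in $B_R$ if for every open half-space $H\subset\mathbb{R}^N$ with $0\in\partial H$, either $u(x)\ge u(\sigma_Hx)$ for all $x\in H\cap B_R$, or $u(x)\le u(\sigma_Hx)$ for all $x\in H\cap B_R$. *)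

theory Defs
  imports "HOL-Analysis.Analysis"
begin

text \<open>R^N is modelled as real^'n with a linearly ordered finite index type;
  the coordinates x_N and x_{N-1} are the ones at the largest and the
  second largest index.\<close>

definition idxN :: "'n::{finite,linorder}" where
  "idxN = Max UNIV"

definition idxN1 :: "'n::{finite,linorder}" where
  "idxN1 = Max (UNIV - {idxN})"

definition rotfun :: "real^'n^'n \<Rightarrow> (real^'n \<Rightarrow> real) \<Rightarrow> real^'n \<Rightarrow> real" where
  "rotfun M u x = u (matrix_inv M *v x)"

definition reflect_hp :: "'a::real_inner \<Rightarrow> real \<Rightarrow> 'a \<Rightarrow> 'a" where
  "reflect_hp a b x = x - (2 * (inner a x - b) / (inner a a)) *\<^sub>R a"

definition separable_in :: "real \<Rightarrow> ('a::real_inner \<Rightarrow> real) \<Rightarrow> bool" where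
  "separable_in R u \<longleftrightarrow>
     (\<forall>a b. a \<noteq> 0 \<and> 0 \<in> frontier {x. inner a x > b} \<longrightarrow>
        (\<forall>x \<in> {x. inner a x > b} \<inter> cball 0 R. u x \<ge> u (reflect_hp a b x)) \<or>
        (\<forall>x \<in> {x. inner a x > b} \<inter> cball 0 R. u x \<le> u (reflect_hp a b x)))"

end

theory Submission
  imports Defs
begin

lemma idx_neq:
  assumes "CARD('n::{finite,linorder}) \<ge> 2"
  shows "(idxN1::'n) \<noteq> idxN"
proof -
  have "UNIV - {idxN::'n} \<noteq> {}"
  proof
    assume "UNIV - {idxN::'n} = {}"
    then have "(UNIV::'n set) \<subseteq> {idxN}" by blast
    then have "CARD('n) \<le> 1" using card_mono[of "{idxN::'n}" UNIV] by simp
    with assms show False by simp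
  qed
  then have "Max (UNIV - {idxN::'n}) \<in> UNIV - {idxN}" by (intro Max_in) auto
  then show ?thesis unfolding idxN1_def by simp
qed

lemma zvec_norm:
  fixes N N1 :: "'n::finite"
  assumes "N \<noteq> N1"
  shows "norm ((\<chi> i. if i = N then p else if i = N1 then q else 0) :: real^'n) = sqrt (p^2 + q^2)"
proof -
  let ?z = "(\<chi> i. if i = N then p else if i = N1 then q else 0) :: real^'n"
  have "inner ?z ?z = (\<Sum>i\<in>UNIV. ?z$i * ?z$i)" by (simp add: inner_vec_def)
  also have "\<dots> = (\<Sum>i\<in>{N,N1}. ?z$i * ?z$i)"
    using sum.mono_neutral_right[of UNIV "{N,N1}" "\<lambda>i. ?z$i * ?z$i"] by auto
  also have "\<dots> = p^2 + q^2" using assms by (simp add: power2_eq_square)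
  finally show ?thesis by (simp add: norm_eq_sqrt_inner)
qed

lemma reflect_norm:
  fixes a x :: "'a::real_inner"
  assumes "a \<noteq> 0"
  shows "norm (reflect_hp a 0 x) = norm x"
proof -
  have aa: "inner a a \<noteq> 0" using assms by simp
  have "inner (reflect_hp a 0 x) (reflect_hp a 0 x) = inner x x"
    unfolding reflect_hp_def using aa
    by (simp add: inner_diff_left inner_diff_right inner_commute field_simps power2_eq_square)
  then show ?thesis by (simp add: norm_eq_sqrt_inner)
qed

theorem theorem2p2:
  fixes u :: "real^('n::{finite,linorder}) \<Rightarrow> real" and R :: real
  assumes "CARD('n) \<ge> 2"
    and "R > 0"
    and "continuous_on (cball 0 R) u"
    and "\<forall>x \<in> cball 0 R. u x > 0"
    and "\<exists>M :: real^('n::{finite,linorder})^('n::{finite,linorder}). orthogonal_matrix M \<and>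
          (\<forall>\<alpha> \<in> {0<..R}. \<forall>h \<in> {-\<alpha>..\<alpha>}. \<forall>x y.
              norm x = \<alpha> \<and> norm y = \<alpha> \<and> x $ idxN = h \<and> y $ idxN = h \<longrightarrow>
              rotfun M u x = rotfun M u y) \<and>
          (\<forall>\<alpha> \<in> {0<..R}. \<forall>\<theta>1 \<theta>2. pi/2 \<le> \<theta>1 \<and> \<theta>1 \<le> \<theta>2 \<and> \<theta>2 \<le> 3*pi/2 \<longrightarrow>
              rotfun M u (\<chi> i. if i = idxN then \<alpha> * sin \<theta>2 else if i = idxN1 then \<alpha> * cos \<theta>2 else 0)
              \<le> rotfun M u (\<chi> i. if i = idxN then \<alpha> * sin \<theta>1 else if i = idxN1 then \<alpha> * cos \<theta>1 else 0))"
  shows "separable_in R u"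
proof -
  obtain M where orth: "orthogonal_matrix M"
    and ax: "\<forall>\<alpha> \<in> {0<..R}. \<forall>h \<in> {-\<alpha>..\<alpha>}. \<forall>x y.
              norm x = \<alpha> \<and> norm y = \<alpha> \<and> x $ idxN = h \<and> y $ idxN = h \<longrightarrow>
              rotfun M u x = rotfun M u y"
    and mono: "\<forall>\<alpha> \<in> {0<..R}. \<forall>\<theta>1 \<theta>2. pi/2 \<le> \<theta>1 \<and> \<theta>1 \<le> \<theta>2 \<and> \<theta>2 \<le> 3*pi/2 \<longrightarrow>
              rotfun M u (\<chi> i. if i = idxN then \<alpha> * sin \<theta>2 else if i = idxN1 then \<alpha> * cos \<theta>2 else 0)
              \<le> rotfun M u (\<chi> i. if i = idxN then \<alpha> * sin \<theta>1 else if i = idxN1 then \<alpha> * cos \<theta>1 else 0)"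
    using assms(5) by blast
  have neq: "(idxN1::'n) \<noteq> idxN" by (rule idx_neq[OF assms(1)])
  define z :: "real \<Rightarrow> real \<Rightarrow> real^('n::{finite,linorder})" where
    "z = (\<lambda>\<alpha> \<theta>. \<chi> i. if i = idxN then \<alpha> * sin \<theta> else if i = idxN1 then \<alpha> * cos \<theta> else 0)"
  have znorm: "norm (z \<alpha> \<theta>) = \<alpha>" if "\<alpha> \<ge> 0" for \<alpha> \<theta>
  proof -
    have "norm (z \<alpha> \<theta>) = sqrt ((\<alpha> * sin \<theta>)^2 + (\<alpha> * cos \<theta>)^2)"
      unfolding z_def by (rule zvec_norm) (use neq in auto)
    also have "(\<alpha> * sin \<theta>)^2 + (\<alpha> * cos \<theta>)^2 = \<alpha>^2"
      by (simp add: power_mult_distrib algebra_simps flip: distrib_left)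
    finally show ?thesis using that by simp
  qed
  have zN: "z \<alpha> \<theta> $ idxN = \<alpha> * sin \<theta>" for \<alpha> \<theta> by (simp add: z_def)
  have monoz: "rotfun M u (z \<alpha> \<theta>2) \<le> rotfun M u (z \<alpha> \<theta>1)"
    if "\<alpha> \<in> {0<..R}" "pi/2 \<le> \<theta>1" "\<theta>1 \<le> \<theta>2" "\<theta>2 \<le> 3*pi/2" for \<alpha> \<theta>1 \<theta>2
    using mono that unfolding z_def by blast
  have key: "rotfun M u x \<le> rotfun M u y"
    if "norm x = norm y" "norm x \<le> R" "x $ idxN \<le> y $ idxN" for x y
  proof (cases "norm x = 0")
    case True
    then have "x = 0" "y = 0" using that(1) by auto
    then show ?thesis by simp
  next
    case False
    define \<alpha> where "\<alpha> = norm x"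
    have a0: "\<alpha> > 0" using False \<alpha>_def by simp
    have aR: "\<alpha> \<in> {0<..R}" using a0 that(2) \<alpha>_def by simp
    define t1 where "t1 = x $ idxN / \<alpha>"
    define t2 where "t2 = y $ idxN / \<alpha>"
    have bx: "\<bar>x $ idxN\<bar> \<le> \<alpha>" using component_le_norm_cart \<alpha>_def by metis
    have byy: "\<bar>y $ idxN\<bar> \<le> \<alpha>" using component_le_norm_cart \<alpha>_def that(1) by metis
    have t1b: "-1 \<le> t1" "t1 \<le> 1" using bx a0 by (auto simp: t1_def field_simps abs_le_iff)
    have t2b: "-1 \<le> t2" "t2 \<le> 1" using byy a0 by (auto simp: t2_def field_simps abs_le_iff)
    have t12: "t1 \<le> t2" using that(3) a0 by (simp add: t1_def t2_def divide_right_mono)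
    define th1 where "th1 = pi - arcsin t1"
    define th2 where "th2 = pi - arcsin t2"
    have ar1: "-(pi/2) \<le> arcsin t1" "arcsin t1 \<le> pi/2" using arcsin_bounded[OF t1b] by auto
    have ar2: "-(pi/2) \<le> arcsin t2" "arcsin t2 \<le> pi/2" using arcsin_bounded[OF t2b] by auto
    have arle: "arcsin t1 \<le> arcsin t2" using arcsin_le_arcsin[OF t1b(1) t12 t2b(2)] .
    have s1: "sin th1 = t1" unfolding th1_def using t1b by (simp add: sin_diff)
    have s2: "sin th2 = t2" unfolding th2_def using t2b by (simp add: sin_diff)
    have "rotfun M u (z \<alpha> th1) \<le> rotfun M u (z \<alpha> th2)"
      by (rule monoz[OF aR]) (use ar1 ar2 arle in \<open>auto simp: th1_def th2_def\<close>)
    moreover have "rotfun M u x = rotfun M u (z \<alpha> th1)"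
    proof -
      have "\<alpha> * sin th1 = x $ idxN" using a0 s1 by (simp add: t1_def)
      then show ?thesis using ax aR bx znorm[of \<alpha> th1] a0 \<alpha>_def zN[of \<alpha> th1]
        by (smt (verit, best) atLeastAtMost_iff)
    qed
    moreover have "rotfun M u y = rotfun M u (z \<alpha> th2)"
    proof -
      have "\<alpha> * sin th2 = y $ idxN" using a0 s2 by (simp add: t2_def)
      then show ?thesis using ax aR byy znorm[of \<alpha> th2] a0 \<alpha>_def that(1) zN[of \<alpha> th2]
        by (smt (verit, best) atLeastAtMost_iff)
    qed
    ultimately show ?thesis by simp
  qed
  have "M ** transpose M = mat 1 \<and> transpose M ** M = mat 1"
    using orth unfolding orthogonal_matrix_def by simp
  then have "M ** matrix_inv M = mat 1 \<and> matrix_inv M ** M = mat 1"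
    unfolding matrix_inv_def by (rule someI)
  then have inv: "matrix_inv M *v (M *v y) = y" for y
    by (simp add: matrix_vector_mul_assoc)
  have uM: "u y = rotfun M u (M *v y)" for y by (simp add: rotfun_def inv)
  have ot: "orthogonal_transformation (\<lambda>x. M *v x)"
    using orth by (simp add: orthogonal_transformation_matrix)
  have Mnorm: "norm (M *v y) = norm y" for y
    using orthogonal_transformation_norm[OF ot] .
  define p where "p = M $ idxN"
  have MN: "(M *v y) $ idxN = inner p y" for y by (simp add: p_def matrix_vector_mul_component)
  show ?thesis
    unfolding separable_in_def
  proof (intro allI impI)
    fix a :: "real^('n::{finite,linorder})" and b
    assume h: "a \<noteq> 0 \<and> 0 \<in> frontier {x. inner a x > b}"
    then have a: "a \<noteq> 0" by simp
    have "0 \<in> closure {x. inner a x > b}" "0 \<notin> interior {x. inner a x > b}"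
      using h by (auto simp: frontier_def)
    moreover have "closure {x. inner a x > b} \<subseteq> {x. inner a x \<ge> b}"
      by (rule closure_minimal) (auto simp: closed_halfspace_ge)
    moreover have "interior {x. inner a x > b} = {x. inner a x > b}"
      by (simp add: interior_open open_halfspace_gt)
    ultimately have b0: "b = 0" by auto
    have aa: "inner a a > 0" using a by simp
    have refl: "inner p (reflect_hp a 0 x) = inner p x - (2 * inner a x / inner a a) * inner a p" for x
      by (simp add: reflect_hp_def inner_diff_right inner_commute)
    have cmp: "u (reflect_hp a 0 x) \<le> u x" if "inner a x > 0" "norm x \<le> R" "inner a p \<ge> 0" for x
    proof -
      have "2 * inner a x / inner a a \<ge> 0" using that aa by simp
      then have "inner p (reflect_hp a 0 x) \<le> inner p x" using refl[of x] that(3)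
        by (smt (verit) mult_nonneg_nonneg)
      then show ?thesis using key[of "M *v reflect_hp a 0 x" "M *v x"] key[of "M *v x" "M *v reflect_hp a 0 x"]
          uM[of x] uM[of "reflect_hp a 0 x"] Mnorm[of x] Mnorm[of "reflect_hp a 0 x"] reflect_norm[OF a, of x] that(2) MN[of x] MN[of "reflect_hp a 0 x"] by auto
    qed
    have cmp2: "u x \<le> u (reflect_hp a 0 x)" if "inner a x > 0" "norm x \<le> R" "inner a p \<le> 0" for x
    proof -
      have "2 * inner a x / inner a a \<ge> 0" using that aa by simp
      then have "inner p x \<le> inner p (reflect_hp a 0 x)" using refl[of x] that(3)
        by (smt (verit) mult_nonneg_nonpos)
      then show ?thesis using key[of "M *v reflect_hp a 0 x" "M *v x"] key[of "M *v x" "M *v reflect_hp a 0 x"]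
          uM[of x] uM[of "reflect_hp a 0 x"] Mnorm[of x] Mnorm[of "reflect_hp a 0 x"] reflect_norm[OF a, of x] that(2) MN[of x] MN[of "reflect_hp a 0 x"] by auto
    qed
    show "(\<forall>x \<in> {x. inner a x > b} \<inter> cball 0 R. u x \<ge> u (reflect_hp a b x)) \<or>
        (\<forall>x \<in> {x. inner a x > b} \<inter> cball 0 R. u x \<le> u (reflect_hp a b x))"
    proof (cases "inner a p \<ge> 0")
      case True then show ?thesis using cmp b0 by auto
    next
      case False then show ?thesis using cmp2 b0 by auto
    qed
  qed
qed

end
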